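(* Let ${\cal X}$ be finite, $T$ an irreducible transition matrix on ${\cal X}$ reversible with respect to $\pi$ (i.e. $\pi(x)T(x,y)=\pi(y)T(y,x)$), and $\ddot{\cal X}=\{(x,y):T(x,y)>0\}$. Let $U$ and $U'$ be two families of probability distributions $U_x(y,\cdot)$, $U'_x(y,\cdot)$ on ${\cal X}$ (for $x,y\in{\cal X}$), each satisfying $T(x,y)\,U_x(y,z)=T(x,z)\,U_x(z,y)$ (resp. with $U'$) for all $x,y,z$ with $y\ne z$, and such that $U'_x(y,z)\ge U_x(y,z)$ for all $x,y,z\in{\cal X}$ with $y\neq z$. Define Markov chains on $\ddot{\cal X}$ with transition probabilities $\ddot T((x_0,x_1),(y_0,y_1))=\delta(x_1,y_0)U_{x_1}(x_0,y_1)$ and $\ddot T'((x_0,x_1),(y_0,y_1))=\delta(x_1,y_0)U'_{x_1}(x_0,y_1)$, and assume both are irreducible. For $f:{\cal X}\to\mathbb{R}$, let $\hat\mu_n$ and $\hat\mu'_n$ be the averages of $f$ applied to the second component of the first $n$ states of the $\ddot T$-chain and the $\ddot T'$-chain respectively. Then $\lim_{n\to\infty}n\,\mathrm{Var}(\hat\mu'_n)\le\lim_{n\to\infty}n\,\mathrm{Var}(\hat\mu_n)$.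
   Context: $\delta(a,b)=1$ if $a=b$ and $0$ otherwise. Both chains leave invariant $\ddot\pi(x,y)=\pi(x)T(x,y)$, whose second-component marginal is $\pi$. *)

theory Defs
  imports "HOL-Analysis.Analysis"
begin

text \<open>Finite Markov kernels are represented as functions P :: 'b => 'b => real,
restricted to a finite state set S.\<close>

definition stochastic_on :: "'b set \<Rightarrow> ('b \<Rightarrow> 'b \<Rightarrow> real) \<Rightarrow> bool" where
  "stochastic_on S P \<longleftrightarrow> (\<forall>a\<in>S. \<forall>b\<in>S. 0 \<le> P a b) \<and> (\<forall>a\<in>S. (\<Sum>b\<in>S. P a b) = 1)"

fun mpow :: "'b set \<Rightarrow> ('b \<Rightarrow> 'b \<Rightarrow> real) \<Rightarrow> nat \<Rightarrow> 'b \<Rightarrow> 'b \<Rightarrow> real" where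
  "mpow S P 0 a b = (if a = b then 1 else 0)"
| "mpow S P (Suc n) a b = (\<Sum>c\<in>S. mpow S P n a c * P c b)"

definition irreducible_on :: "'b set \<Rightarrow> ('b \<Rightarrow> 'b \<Rightarrow> real) \<Rightarrow> bool" where
  "irreducible_on S P \<longleftrightarrow> (\<forall>a\<in>S. \<forall>b\<in>S. \<exists>n. mpow S P n a b > 0)"

definition dist_at :: "'b set \<Rightarrow> ('b \<Rightarrow> 'b \<Rightarrow> real) \<Rightarrow> ('b \<Rightarrow> real) \<Rightarrow> nat \<Rightarrow> 'b \<Rightarrow> real" where
  "dist_at S P mu i b = (\<Sum>a\<in>S. mu a * mpow S P i a b)"

definition chain_mean :: "'b set \<Rightarrow> ('b \<Rightarrow> 'b \<Rightarrow> real) \<Rightarrow> ('b \<Rightarrow> real) \<Rightarrow> ('b \<Rightarrow> real) \<Rightarrow> nat \<Rightarrow> real" where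
  "chain_mean S P mu g i = (\<Sum>a\<in>S. dist_at S P mu i a * g a)"

text \<open>E[g(X_i) g(X_j)] (Markov property, i and j in either order)\<close>
definition chain_moment2 :: "'b set \<Rightarrow> ('b \<Rightarrow> 'b \<Rightarrow> real) \<Rightarrow> ('b \<Rightarrow> real) \<Rightarrow> ('b \<Rightarrow> real) \<Rightarrow> nat \<Rightarrow> nat \<Rightarrow> real" where
  "chain_moment2 S P mu g i j =
     (\<Sum>a\<in>S. dist_at S P mu (min i j) a * g a *
        (\<Sum>b\<in>S. mpow S P (max i j - min i j) a b * g b))"

definition var_avg :: "'b set \<Rightarrow> ('b \<Rightarrow> 'b \<Rightarrow> real) \<Rightarrow> ('b \<Rightarrow> real) \<Rightarrow> ('b \<Rightarrow> real) \<Rightarrow> nat \<Rightarrow> real" where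
  "var_avg S P mu g n =
     (\<Sum>i<n. \<Sum>j<n. chain_moment2 S P mu g i j) / (real n)^2
     - ((\<Sum>i<n. chain_mean S P mu g i) / real n)^2"

text \<open>Lifted kernel: Tdd((x0,x1),(y0,y1)) = delta(x1,y0) U_{x1}(x0,y1),
  with U x y z standing for U_x(y,z).\<close>
definition lift_kernel :: "('a \<Rightarrow> 'a \<Rightarrow> 'a \<Rightarrow> real) \<Rightarrow> 'a \<times> 'a \<Rightarrow> 'a \<times> 'a \<Rightarrow> real" where
  "lift_kernel U p q = (if snd p = fst q then U (snd p) (fst p) (snd q) else 0)"

end

theory Submission
  imports Defs
begin

definition Pop :: "'b set \<Rightarrow> ('b \<Rightarrow> 'b \<Rightarrow> real) \<Rightarrow> ('b \<Rightarrow> real) \<Rightarrow> 'b \<Rightarrow> real" where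
  "Pop S P v = (\<lambda>p. \<Sum>q\<in>S. P p q * v q)"

definition ip :: "'b set \<Rightarrow> ('b \<Rightarrow> real) \<Rightarrow> ('b \<Rightarrow> real) \<Rightarrow> ('b \<Rightarrow> real) \<Rightarrow> real" where
  "ip S mu u v = (\<Sum>p\<in>S. mu p * u p * v p)"

definition Aop :: "'b set \<Rightarrow> ('b \<Rightarrow> 'b \<Rightarrow> real) \<Rightarrow> ('b \<Rightarrow> real) \<Rightarrow> 'b \<Rightarrow> real" where
  "Aop S P v = (\<lambda>p. v p - Pop S P v p)"

lemma sum_lin3: "(\<Sum>p\<in>S. mu p * (a p - b p + (c::real))) = (\<Sum>p\<in>S. mu p * a p) - (\<Sum>p\<in>S. mu p * b p) + c * (\<Sum>p\<in>S. mu p)"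
  by (simp add: right_diff_distrib distrib_left sum.distrib sum_subtractf sum_distrib_left mult.commute)

lemma ip_cong:
  assumes "\<And>p. p \<in> S \<Longrightarrow> u p = u' p" "\<And>p. p \<in> S \<Longrightarrow> v p = v' p"
  shows "ip S mu u v = ip S mu u' v'"
  unfolding ip_def using assms by (intro sum.cong) auto

lemma ip_sym: "ip S mu u v = ip S mu v u"
  unfolding ip_def by (simp add: ac_simps)

lemma ip_add1: "ip S mu (\<lambda>p. u p + v p) w = ip S mu u w + ip S mu v w"
  unfolding ip_def by (simp add: algebra_simps sum.distrib)

lemma ip_diff1: "ip S mu (\<lambda>p. u p - v p) w = ip S mu u w - ip S mu v w"
  unfolding ip_def by (simp add: algebra_simps sum_subtractf)

lemma ip_scale1: "ip S mu (\<lambda>p. c * u p) w = c * ip S mu u w"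
  unfolding ip_def by (simp add: algebra_simps sum_distrib_left)

lemma ip_add2: "ip S mu w (\<lambda>p. u p + v p) = ip S mu w u + ip S mu w v"
  unfolding ip_def by (simp add: algebra_simps sum.distrib)

lemma ip_diff2: "ip S mu w (\<lambda>p. u p - v p) = ip S mu w u - ip S mu w v"
  unfolding ip_def by (simp add: algebra_simps sum_subtractf)

lemma ip_scale2: "ip S mu w (\<lambda>p. c * u p) = c * ip S mu w u"
  unfolding ip_def by (simp add: algebra_simps sum_distrib_left)

lemma ip_sum2: "finite K \<Longrightarrow> ip S mu w (\<lambda>p. \<Sum>k\<in>K. f k p) = (\<Sum>k\<in>K. ip S mu w (f k))"
  unfolding ip_def by (simp add: sum_distrib_left sum.swap[of _ S])

lemma Pop_cong: "(\<And>q. q \<in> S \<Longrightarrow> v q = w q) \<Longrightarrow> Pop S P v p = Pop S P w p"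
  unfolding Pop_def by (auto intro: sum.cong)

lemma Pop_add: "Pop S P (\<lambda>p. u p + v p) = (\<lambda>p. Pop S P u p + Pop S P v p)"
  unfolding Pop_def by (simp add: algebra_simps sum.distrib)

lemma Pop_diff: "Pop S P (\<lambda>p. u p - v p) = (\<lambda>p. Pop S P u p - Pop S P v p)"
  unfolding Pop_def by (simp add: algebra_simps sum_subtractf)

lemma Pop_scale: "Pop S P (\<lambda>p. c * u p) = (\<lambda>p. c * Pop S P u p)"
  unfolding Pop_def by (simp add: algebra_simps sum_distrib_left)

lemma Pn_add: "(Pop S P ^^ n) (\<lambda>p. u p + v p) = (\<lambda>p. (Pop S P ^^ n) u p + (Pop S P ^^ n) v p)"
  by (induction n) (simp_all add: Pop_add)

lemma Pn_diff: "(Pop S P ^^ n) (\<lambda>p. u p - v p) = (\<lambda>p. (Pop S P ^^ n) u p - (Pop S P ^^ n) v p)"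
  by (induction n) (simp_all add: Pop_diff)

lemma Pn_scale: "(Pop S P ^^ n) (\<lambda>p. c * u p) = (\<lambda>p. c * (Pop S P ^^ n) u p)"
  by (induction n) (simp_all add: Pop_scale)

lemma Pn_cong: "(\<And>q. q \<in> S \<Longrightarrow> v q = w q) \<Longrightarrow> p \<in> S \<Longrightarrow> (Pop S P ^^ n) v p = (Pop S P ^^ n) w p"
proof (induction n arbitrary: p)
  case 0 then show ?case by simp
next
  case (Suc n) then show ?case by (auto simp: Pop_def intro!: sum.cong)
qed

lemma dsum:
  fixes \<gamma> :: "nat \<Rightarrow> real"
  shows "(\<Sum>i<n. \<Sum>j<n. \<gamma> (max i j - min i j)) = 2 * (\<Sum>i<n. \<Sum>k\<le>i. \<gamma> k) - real n * \<gamma> 0"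
proof (induction n)
  case 0 then show ?case by simp
next
  case (Suc n)
  have r: "(\<Sum>j<n. \<gamma> (n - j)) = (\<Sum>k<n. \<gamma> (Suc k))"
    using sum.nat_diff_reindex[of "\<lambda>k. \<gamma> (Suc k)" n] by (simp add: Suc_diff_Suc)
  have a: "(\<Sum>k\<le>n. \<gamma> k) = \<gamma> 0 + (\<Sum>k<n. \<gamma> (Suc k))"
    by (simp only: lessThan_Suc_atMost[symmetric] sum.lessThan_Suc_shift)
  have "(\<Sum>i<Suc n. \<Sum>j<Suc n. \<gamma> (max i j - min i j))
      = (\<Sum>i<n. \<Sum>j<n. \<gamma> (max i j - min i j)) + (\<Sum>i<n. \<gamma> (n - i)) + (\<Sum>j<n. \<gamma> (n - j)) + \<gamma> 0"
    by (simp add: sum.distrib max_def min_def)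
  then show ?case using Suc r a by (simp add: algebra_simps)
qed

locale kern =
  fixes S :: "'b::finite set" and P :: "'b \<Rightarrow> 'b \<Rightarrow> real" and mu :: "'b \<Rightarrow> real" and J :: "'b \<Rightarrow> 'b"
  assumes P_nonneg: "\<And>a b. a \<in> S \<Longrightarrow> b \<in> S \<Longrightarrow> 0 \<le> P a b"
  and P_sum: "\<And>a. a \<in> S \<Longrightarrow> (\<Sum>b\<in>S. P a b) = 1"
  and mu_nonneg: "\<And>a. a \<in> S \<Longrightarrow> 0 \<le> mu a"
  and mu_sum: "(\<Sum>a\<in>S. mu a) = 1"
  and J_in: "\<And>p. p \<in> S \<Longrightarrow> J p \<in> S"
  and J_J: "\<And>p. p \<in> S \<Longrightarrow> J (J p) = p"
  and mu_J: "\<And>p. p \<in> S \<Longrightarrow> mu (J p) = mu p"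
  and skew: "\<And>p q. p \<in> S \<Longrightarrow> q \<in> S \<Longrightarrow> mu p * P p q = mu (J q) * P (J q) (J p)"
begin

lemma fin: "finite S" by simp

lemma J_bij: "bij_betw J S S"
  by (rule bij_betwI[where g=J]) (auto simp: J_in J_J)

lemma sum_J: "(\<Sum>p\<in>S. f (J p)) = (\<Sum>p\<in>S. f p)"
  using sum.reindex_bij_betw[OF J_bij] .

lemma stat: "q \<in> S \<Longrightarrow> (\<Sum>p\<in>S. mu p * P p q) = mu q"
proof -
  assume q: "q \<in> S"
  have "(\<Sum>p\<in>S. mu p * P p q) = (\<Sum>p\<in>S. mu (J q) * P (J q) (J p))"
    using skew q by (intro sum.cong) auto
  also have "\<dots> = mu (J q) * (\<Sum>p\<in>S. P (J q) (J p))" by (simp add: sum_distrib_left)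
  also have "(\<Sum>p\<in>S. P (J q) (J p)) = (\<Sum>p\<in>S. P (J q) p)" using sum_J[of "\<lambda>p. P (J q) p"] .
  also have "\<dots> = 1" using P_sum J_in q by auto
  finally show ?thesis using mu_J q by simp
qed

lemma mean_Pop: "(\<Sum>p\<in>S. mu p * Pop S P v p) = (\<Sum>p\<in>S. mu p * v p)"
proof -
  have "(\<Sum>p\<in>S. mu p * Pop S P v p) = (\<Sum>p\<in>S. \<Sum>q\<in>S. mu p * P p q * v q)"
    by (simp add: Pop_def sum_distrib_left mult.assoc)
  also have "\<dots> = (\<Sum>q\<in>S. (\<Sum>p\<in>S. mu p * P p q) * v q)"
    by (subst sum.swap) (simp add: sum_distrib_right)
  also have "\<dots> = (\<Sum>q\<in>S. mu q * v q)" by (intro sum.cong) (auto simp: stat)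
  finally show ?thesis .
qed

lemma mean_Pn: "(\<Sum>p\<in>S. mu p * (Pop S P ^^ n) v p) = (\<Sum>p\<in>S. mu p * v p)"
  by (induction n) (simp_all add: mean_Pop)

lemma Pop_const: "p \<in> S \<Longrightarrow> Pop S P (\<lambda>_. c) p = c"
  by (simp add: Pop_def P_sum flip: sum_distrib_right)

lemma Pn_const: "p \<in> S \<Longrightarrow> (Pop S P ^^ n) (\<lambda>_. c) p = c"
proof (induction n arbitrary: p)
  case 0 then show ?case by simp
next
  case (Suc n)
  have "(Pop S P ^^ Suc n) (\<lambda>_. c) p = Pop S P ((Pop S P ^^ n) (\<lambda>_. c)) p" by simp
  also have "\<dots> = Pop S P (\<lambda>_. c) p" using Suc by (intro Pop_cong) auto
  also have "\<dots> = c" using Suc Pop_const by auto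
  finally show ?case .
qed

lemma mpow_nonneg: "b \<in> S \<Longrightarrow> 0 \<le> mpow S P n a b"
proof (induction n arbitrary: b)
  case 0 then show ?case by simp
next
  case (Suc n) then show ?case by (auto intro!: sum_nonneg mult_nonneg_nonneg P_nonneg)
qed

lemma mpow_Pn: "a \<in> S \<Longrightarrow> (\<Sum>b\<in>S. mpow S P n a b * v b) = (Pop S P ^^ n) v a"
proof (induction n arbitrary: v)
  case 0
  have "(\<Sum>b\<in>S. mpow S P 0 a b * v b) = (\<Sum>b\<in>S. if a = b then v b else 0)"
    by (intro sum.cong) auto
  then show ?case using 0 by simp
next
  case (Suc n)
  have "(\<Sum>b\<in>S. mpow S P (Suc n) a b * v b) = (\<Sum>b\<in>S. \<Sum>c\<in>S. mpow S P n a c * P c b * v b)"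
    by (simp add: sum_distrib_right)
  also have "\<dots> = (\<Sum>c\<in>S. mpow S P n a c * Pop S P v c)"
    by (subst sum.swap) (simp add: Pop_def sum_distrib_left mult.assoc)
  also have "\<dots> = (Pop S P ^^ n) (Pop S P v) a" using Suc by simp
  also have "\<dots> = (Pop S P ^^ Suc n) v a" by (simp add: funpow_Suc_right del: funpow.simps)
  finally show ?case .
qed

lemma dist_at_mu: "b \<in> S \<Longrightarrow> dist_at S P mu i b = mu b"
proof (induction i arbitrary: b)
  case 0 then show ?case by (simp add: dist_at_def if_distrib cong: if_cong)
next
  case (Suc i)
  have "dist_at S P mu (Suc i) b = (\<Sum>c\<in>S. dist_at S P mu i c * P c b)"
  proof -
    have "dist_at S P mu (Suc i) b = (\<Sum>a\<in>S. \<Sum>c\<in>S. mu a * mpow S P i a c * P c b)"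
      unfolding dist_at_def by (simp add: sum_distrib_left mult.assoc)
    also have "\<dots> = (\<Sum>c\<in>S. \<Sum>a\<in>S. mu a * mpow S P i a c * P c b)" by (rule sum.swap)
    also have "\<dots> = (\<Sum>c\<in>S. dist_at S P mu i c * P c b)"
      unfolding dist_at_def by (simp add: sum_distrib_right)
    finally show ?thesis .
  qed
  also have "\<dots> = (\<Sum>c\<in>S. mu c * P c b)" using Suc by (intro sum.cong) auto
  finally show ?case using stat Suc by simp
qed

lemma Pn_bound:
  assumes "\<And>q. q \<in> S \<Longrightarrow> \<bar>v q\<bar> \<le> B" "p \<in> S"
  shows "\<bar>(Pop S P ^^ n) v p\<bar> \<le> B"
  using assms(2)
proof (induction n arbitrary: p)
  case 0 then show ?case using assms by simp
next
  case (Suc n)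
  have "\<bar>(Pop S P ^^ Suc n) v p\<bar> = \<bar>\<Sum>q\<in>S. P p q * (Pop S P ^^ n) v q\<bar>" by (simp add: Pop_def)
  also have "\<dots> \<le> (\<Sum>q\<in>S. \<bar>P p q * (Pop S P ^^ n) v q\<bar>)" by (rule sum_abs)
  also have "\<dots> \<le> (\<Sum>q\<in>S. P p q * B)"
    using Suc P_nonneg by (intro sum_mono) (auto simp: abs_mult intro!: mult_left_mono)
  also have "\<dots> = B" using P_sum Suc by (simp flip: sum_distrib_right)
  finally show ?case .
qed

lemma telescope:
  assumes "\<And>p. p \<in> S \<Longrightarrow> h p - Pop S P h p = v p" "p \<in> S"
  shows "(Pop S P ^^ k) v p = (Pop S P ^^ k) h p - (Pop S P ^^ Suc k) h p"
proof -
  have "(Pop S P ^^ k) v p = (Pop S P ^^ k) (\<lambda>p. h p - Pop S P h p) p"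
    using assms by (intro Pn_cong) auto
  also have "\<dots> = (Pop S P ^^ k) h p - (Pop S P ^^ k) (Pop S P h) p" by (simp add: Pn_diff)
  also have "(Pop S P ^^ k) (Pop S P h) = (Pop S P ^^ Suc k) h" by (simp add: funpow_Suc_right del: funpow.simps)
  finally show ?thesis .
qed

lemma ip_J: "ip S mu u v = ip S mu (\<lambda>p. u (J p)) (\<lambda>p. v (J p))"
  unfolding ip_def using sum_J[of "\<lambda>p. mu p * u p * v p"] by (simp add: mu_J)

lemma adj: "ip S mu u (Pop S P v) = ip S mu (\<lambda>p. v (J p)) (Pop S P (\<lambda>p. u (J p)))"
proof -
  have "ip S mu u (Pop S P v) = (\<Sum>p\<in>S. \<Sum>q\<in>S. mu p * P p q * u p * v q)"
    by (simp add: ip_def Pop_def sum_distrib_left mult.assoc mult.left_commute)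
  also have "\<dots> = (\<Sum>p\<in>S. \<Sum>q\<in>S. mu (J q) * P (J q) (J p) * u p * v q)"
    by (intro sum.cong refl) (simp add: skew)
  also have "\<dots> = (\<Sum>p\<in>S. \<Sum>q\<in>S. mu (J q) * P (J q) p * u (J p) * v q)"
    using sum_J[of "\<lambda>p. \<Sum>q\<in>S. mu (J q) * P (J q) p * u (J p) * v q"] by (simp add: J_J)
  also have "\<dots> = (\<Sum>p\<in>S. \<Sum>q\<in>S. mu q * P q p * u (J p) * v (J q))"
  proof (rule sum.cong[OF refl])
    fix p assume "p \<in> S"
    have "(\<Sum>q\<in>S. mu q * P q p * u (J p) * v (J q)) = (\<Sum>q\<in>S. mu (J q) * P (J q) p * u (J p) * v (J (J q)))"
      using sum_J[of "\<lambda>q. mu q * P q p * u (J p) * v (J q)"] by simp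
    also have "\<dots> = (\<Sum>q\<in>S. mu (J q) * P (J q) p * u (J p) * v q)"
      by (intro sum.cong) (auto simp: J_J)
    finally show "(\<Sum>q\<in>S. mu (J q) * P (J q) p * u (J p) * v q) = (\<Sum>q\<in>S. mu q * P q p * u (J p) * v (J q))" by simp
  qed
  also have "\<dots> = ip S mu (\<lambda>p. v (J p)) (Pop S P (\<lambda>p. u (J p)))"
    by (subst sum.swap) (simp add: ip_def Pop_def sum_distrib_left ac_simps)
  finally show ?thesis .
qed

lemma contraction: "ip S mu u (Pop S P u) \<le> ip S mu u u"
proof -
  have "ip S mu u (Pop S P u) = (\<Sum>p\<in>S. \<Sum>q\<in>S. mu p * P p q * (u p * u q))"
    by (simp add: ip_def Pop_def sum_distrib_left mult.assoc mult.left_commute)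
  also have "\<dots> \<le> (\<Sum>p\<in>S. \<Sum>q\<in>S. mu p * P p q * ((u p)^2 / 2) + mu p * P p q * ((u q)^2 / 2))"
  proof (intro sum_mono)
    fix p q assume "p \<in> S" "q \<in> S"
    then have "0 \<le> mu p * P p q" by (simp add: mu_nonneg P_nonneg)
    moreover have "u p * u q \<le> (u p)^2 / 2 + (u q)^2 / 2"
    proof -
      have "0 \<le> (u p - u q)^2" by simp
      then show ?thesis unfolding power2_diff by linarith
    qed
    ultimately have "mu p * P p q * (u p * u q) \<le> mu p * P p q * ((u p)^2 / 2 + (u q)^2 / 2)"
      by (rule mult_left_mono[rotated])
    then show "mu p * P p q * (u p * u q) \<le> mu p * P p q * ((u p)^2 / 2) + mu p * P p q * ((u q)^2 / 2)"
      by (simp add: distrib_left)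
  qed
  also have "\<dots> = (\<Sum>p\<in>S. \<Sum>q\<in>S. mu p * P p q * ((u p)^2 / 2)) + (\<Sum>p\<in>S. \<Sum>q\<in>S. mu p * P p q * ((u q)^2 / 2))"
    by (simp only: sum.distrib)
  also have "(\<Sum>p\<in>S. \<Sum>q\<in>S. mu p * P p q * ((u p)^2 / 2)) = (\<Sum>p\<in>S. mu p * ((u p)^2 / 2) * (\<Sum>q\<in>S. P p q))"
    by (simp only: sum_distrib_left) (simp add: ac_simps)
  also have "\<dots> = (\<Sum>p\<in>S. mu p * ((u p)^2 / 2))"
    by (intro sum.cong) (simp_all add: P_sum)
  also have "(\<Sum>p\<in>S. \<Sum>q\<in>S. mu p * P p q * ((u q)^2 / 2)) = (\<Sum>q\<in>S. (\<Sum>p\<in>S. mu p * P p q) * ((u q)^2 / 2))"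
    by (subst sum.swap) (simp only: sum_distrib_right)
  also have "\<dots> = (\<Sum>q\<in>S. mu q * ((u q)^2 / 2))"
    by (intro sum.cong) (simp_all add: stat)
  also have "(\<Sum>p\<in>S. mu p * ((u p)^2 / 2)) + (\<Sum>q\<in>S. mu q * ((u q)^2 / 2)) = ip S mu u u"
    unfolding ip_def by (simp only: power2_eq_square flip: sum.distrib) (intro sum.cong; simp add: algebra_simps)
  finally show ?thesis .
qed

end

context kern
begin

lemma harmonic_const:
  assumes irr: "irreducible_on S P"
    and harm: "\<And>p. p \<in> S \<Longrightarrow> v p = Pop S P v p"
    and pq: "p \<in> S" "q \<in> S"
  shows "v p = v q"
proof -
  have fS: "finite (v ` S)" by simp
  have ne: "v ` S \<noteq> {}" using pq by blast
  have "Max (v ` S) \<in> v ` S" by (rule Max_in[OF fS ne])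
  then obtain p0 where p0S: "p0 \<in> S" and p0M: "v p0 = Max (v ` S)" by (metis imageE)
  have p0le: "v y \<le> v p0" if "y \<in> S" for y
  proof -
    have "v y \<in> v ` S" using that by (rule imageI)
    then have "v y \<le> Max (v ` S)" by (rule Max_ge[OF fS])
    then show ?thesis using p0M by simp
  qed
  have step: "v b = v p0" if ab: "a \<in> S" "b \<in> S" "v a = v p0" "P a b > 0" for a b
  proof -
    have "(\<Sum>c\<in>S. P a c * (v p0 - v c)) = (\<Sum>c\<in>S. P a c * v p0) - (\<Sum>c\<in>S. P a c * v c)"
      by (simp only: right_diff_distrib sum_subtractf)
    also have "(\<Sum>c\<in>S. P a c * v p0) = v p0"
      using P_sum[OF ab(1)] by (simp flip: sum_distrib_right)
    also have "(\<Sum>c\<in>S. P a c * v c) = Pop S P v a" by (simp add: Pop_def)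
    also have "Pop S P v a = v a" using harm[OF ab(1)] by simp
    finally have z: "(\<Sum>c\<in>S. P a c * (v p0 - v c)) = 0" using ab(3) by simp
    have nn: "\<And>c. c\<in>S \<Longrightarrow> 0 \<le> P a c * (v p0 - v c)"
      using P_nonneg ab(1) p0le by simp
    have "\<forall>c\<in>S. P a c * (v p0 - v c) = 0"
      using sum_nonneg_eq_0_iff[of S "\<lambda>c. P a c * (v p0 - v c)"] nn z fin by blast
    then have "P a b * (v p0 - v b) = 0" using ab(2) by blast
    then show ?thesis using ab(4) by simp
  qed
  have reach: "\<forall>b\<in>S. mpow S P n p0 b > 0 \<longrightarrow> v b = v p0" for n
  proof (induction n)
    case 0 then show ?case by simp
  next
    case (Suc n)
    show ?case
    proof (intro ballI impI)
      fix b assume b: "b \<in> S" and pos: "0 < mpow S P (Suc n) p0 b"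
      have "\<exists>c\<in>S. 0 < mpow S P n p0 c * P c b"
      proof (rule ccontr)
        assume "\<not> ?thesis"
        then have "\<And>c. c \<in> S \<Longrightarrow> mpow S P n p0 c * P c b \<le> 0" using not_less by blast
        then have "(\<Sum>c\<in>S. mpow S P n p0 c * P c b) \<le> 0" by (rule sum_nonpos)
        then show False using pos by simp
      qed
      then obtain c where c: "c \<in> S" "0 < mpow S P n p0 c * P c b" by blast
      have nn: "0 \<le> mpow S P n p0 c" using mpow_nonneg c(1) by blast
      have "0 < mpow S P n p0 c \<and> 0 < P c b"
        using c(2) nn by (simp add: zero_less_mult_iff)
      then have "v c = v p0" using Suc.IH c(1) by blast
      then show "v b = v p0" using step[OF c(1) b] \<open>0 < mpow S P n p0 c \<and> 0 < P c b\<close> by blast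
    qed
  qed
  obtain n1 where "mpow S P n1 p0 p > 0" using irr p0S pq unfolding irreducible_on_def by blast
  then have "v p = v p0" using reach pq by blast
  moreover obtain n2 where "mpow S P n2 p0 q > 0" using irr p0S pq unfolding irreducible_on_def by blast
  then have "v q = v p0" using reach pq by blast
  ultimately show ?thesis by simp
qed

lemma poisson:
  assumes irr: "irreducible_on S P"
    and m0: "(\<Sum>p\<in>S. mu p * w p) = 0"
  shows "\<exists>h. \<forall>p\<in>S. h p - Pop S P h p = w p"
proof -
  define \<Phi> :: "real^'b \<Rightarrow> real^'b" where
    "\<Phi> x = (\<chi> p. if p \<in> S then x$p - (\<Sum>q\<in>S. P p q * x$q) + (\<Sum>q\<in>S. mu q * x$q) else x$p)" for x
  have lin: "linear \<Phi>"
  proof (rule linearI)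
    fix b1 b2 :: "real^'b"
    show "\<Phi> (b1 + b2) = \<Phi> b1 + \<Phi> b2"
      unfolding \<Phi>_def vec_eq_iff by (simp add: sum.distrib ring_distribs)
  next
    fix r :: real and b :: "real^'b"
    show "\<Phi> (r *\<^sub>R b) = r *\<^sub>R \<Phi> b"
      unfolding \<Phi>_def vec_eq_iff by (simp add: sum_distrib_left ring_distribs mult.left_commute)
  qed
  have inj: "inj \<Phi>"
    unfolding linear_injective_0[OF lin]
  proof (intro allI impI)
    fix x assume x0: "\<Phi> x = 0"
    define v where "v p = x$p" for p
    define c where "c = (\<Sum>q\<in>S. mu q * v q)"
    have xp: "\<Phi> x $ p = 0" for p using x0 by simp
    have out: "v p = 0" if "p \<notin> S" for p
      using xp[of p] that unfolding \<Phi>_def v_def by simp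
    have on: "v p - Pop S P v p + c = 0" if "p \<in> S" for p
      using xp[of p] that unfolding \<Phi>_def v_def c_def Pop_def by simp
    have "(\<Sum>p\<in>S. mu p * (v p - Pop S P v p + c)) = 0"
      using on by simp
    then have "(\<Sum>p\<in>S. mu p * v p) - (\<Sum>p\<in>S. mu p * Pop S P v p) + c * (\<Sum>p\<in>S. mu p) = 0"
      by (simp only: sum_lin3)
    then have c0: "c = 0" using mean_Pop mu_sum by simp
    have harm: "v p = Pop S P v p" if "p \<in> S" for p using on[OF that] c0 by simp
    have "v p = 0" for p
    proof (cases "p \<in> S")
      case True
      have hc: "\<And>q. q \<in> S \<Longrightarrow> v q = v p" using harmonic_const[OF irr harm] True by blast
      have "c = (\<Sum>q\<in>S. mu q * v p)" unfolding c_def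
        by (intro sum.cong refl) (simp add: hc)
      also have "\<dots> = v p" using mu_sum by (simp flip: sum_distrib_right)
      finally show ?thesis using c0 by simp
    next
      case False then show ?thesis by (rule out)
    qed
    then show "x = 0" unfolding v_def by (simp add: vec_eq_iff)
  qed
  have "surj \<Phi>" by (rule linear_inj_imp_surj[OF lin inj])
  then obtain x where x: "\<Phi> x = (\<chi> p. w p)" by (metis surjD)
  define h where "h p = x$p" for p
  define c where "c = (\<Sum>q\<in>S. mu q * h q)"
  have on: "h p - Pop S P h p + c = w p" if "p \<in> S" for p
  proof -
    have "\<Phi> x $ p = w p" using x by simp
    then show ?thesis using that unfolding \<Phi>_def h_def c_def Pop_def by simp
  qed
  have "(\<Sum>p\<in>S. mu p * (h p - Pop S P h p + c)) = (\<Sum>p\<in>S. mu p * w p)"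
    by (intro sum.cong refl) (simp add: on)
  then have "(\<Sum>p\<in>S. mu p * (h p - Pop S P h p + c)) = 0" using m0 by simp
  then have "(\<Sum>p\<in>S. mu p * h p) - (\<Sum>p\<in>S. mu p * Pop S P h p) + c * (\<Sum>p\<in>S. mu p) = 0"
    by (simp only: sum_lin3)
  then have c0: "c = 0" using mean_Pop mu_sum by simp
  show ?thesis using on c0 by (intro exI[of _ h]) simp
qed

end

lemma ip_const2: "ip S mu g (\<lambda>_. c) = c * (\<Sum>p\<in>S. mu p * g p)"
  unfolding ip_def by (simp add: sum_distrib_left ac_simps)

lemma ip_const1: "ip S mu (\<lambda>_. c) g = c * (\<Sum>p\<in>S. mu p * g p)"
  unfolding ip_def by (simp add: sum_distrib_left ac_simps)

lemma sum_Suc_real: "(\<Sum>i<n. real (Suc i)) = real n * (real n + 1) / 2"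
  by (induction n) (simp_all add: field_simps)

context kern
begin

lemma ip_bound:
  assumes "\<And>q. q \<in> S \<Longrightarrow> \<bar>v q\<bar> \<le> B"
  shows "\<bar>ip S mu g v\<bar> \<le> (\<Sum>p\<in>S. mu p * \<bar>g p\<bar>) * B"
proof -
  have "\<bar>ip S mu g v\<bar> \<le> (\<Sum>p\<in>S. \<bar>mu p * g p * v p\<bar>)" unfolding ip_def by (rule sum_abs)
  also have "\<dots> \<le> (\<Sum>p\<in>S. mu p * \<bar>g p\<bar> * B)"
  proof (rule sum_mono)
    fix p assume p: "p \<in> S"
    have "\<bar>mu p * g p * v p\<bar> = mu p * \<bar>g p\<bar> * \<bar>v p\<bar>" using mu_nonneg[OF p] by (simp add: abs_mult)
    also have "\<dots> \<le> mu p * \<bar>g p\<bar> * B" using assms[OF p] mu_nonneg[OF p] by (simp add: mult_left_mono)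
    finally show "\<bar>mu p * g p * v p\<bar> \<le> mu p * \<bar>g p\<bar> * B" .
  qed
  also have "\<dots> = (\<Sum>p\<in>S. mu p * \<bar>g p\<bar>) * B" by (simp add: sum_distrib_right)
  finally show ?thesis .
qed

lemma limit:
  assumes irr: "irreducible_on S P"
    and m_def: "m = (\<Sum>p\<in>S. mu p * g p)"
    and hP: "\<And>p. p \<in> S \<Longrightarrow> h p - Pop S P h p = g p - m"
  shows "(\<lambda>n. real n * var_avg S P mu g n) \<longlonglongrightarrow> m^2 + 2 * ip S mu (\<lambda>p. g p - m) h - ip S mu g g"
proof -
  define \<gamma> where "\<gamma> k = ip S mu g ((Pop S P ^^ k) g)" for k
  have mom: "chain_moment2 S P mu g i j = \<gamma> (max i j - min i j)" for i j
    unfolding chain_moment2_def \<gamma>_def ip_def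
    by (intro sum.cong refl) (simp add: dist_at_mu mpow_Pn)
  have mean: "chain_mean S P mu g i = m" for i
    unfolding chain_mean_def m_def by (intro sum.cong refl) (simp add: dist_at_mu)
  have ps: "(\<Sum>k\<le>i. (Pop S P ^^ k) g p) = real (Suc i) * m + h p - (Pop S P ^^ Suc i) h p"
    if p: "p \<in> S" for p i
  proof -
    have e: "(Pop S P ^^ k) g p = m + ((Pop S P ^^ k) h p - (Pop S P ^^ Suc k) h p)" for k
    proof -
      have "(Pop S P ^^ k) (\<lambda>p. g p - m) p = (Pop S P ^^ k) g p - m"
        by (simp add: Pn_diff Pn_const[OF p])
      moreover have "(Pop S P ^^ k) (\<lambda>p. g p - m) p = (Pop S P ^^ k) h p - (Pop S P ^^ Suc k) h p"
        by (rule telescope[OF hP p])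
      ultimately show ?thesis by linarith
    qed
    have "(\<Sum>k\<le>i. (Pop S P ^^ k) g p) = (\<Sum>k<Suc i. m + ((Pop S P ^^ k) h p - (Pop S P ^^ Suc k) h p))"
      by (simp only: lessThan_Suc_atMost e)
    also have "\<dots> = real (Suc i) * m + ((Pop S P ^^ 0) h p - (Pop S P ^^ Suc i) h p)"
      by (simp only: sum.distrib sum_lessThan_telescope'[of "\<lambda>k. (Pop S P ^^ k) h p"]) simp
    finally show ?thesis by simp
  qed
  have Sg: "(\<Sum>k\<le>i. \<gamma> k) = real (Suc i) * m * m + ip S mu g h - ip S mu g ((Pop S P ^^ Suc i) h)" for i
  proof -
    have "(\<Sum>k\<le>i. \<gamma> k) = ip S mu g (\<lambda>p. \<Sum>k\<le>i. (Pop S P ^^ k) g p)"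
      unfolding \<gamma>_def by (simp add: ip_sum2)
    also have "\<dots> = ip S mu g (\<lambda>p. real (Suc i) * m + h p - (Pop S P ^^ Suc i) h p)"
      by (intro ip_cong) (simp_all add: ps)
    also have "\<dots> = real (Suc i) * m * m + ip S mu g h - ip S mu g ((Pop S P ^^ Suc i) h)"
      by (simp add: ip_diff2 ip_add2 ip_const2 m_def)
    finally show ?thesis .
  qed
  define c0 where "c0 = (\<Sum>p\<in>S. mu p * h p)"
  have "(\<Sum>p\<in>S. mu p * (h p - c0)) = 0"
    by (simp add: right_diff_distrib sum_subtractf c0_def mu_sum flip: sum_distrib_right)
  then have "\<exists>h2. \<forall>p\<in>S. h2 p - Pop S P h2 p = h p - c0" by (rule poisson[OF irr])
  then obtain h2 where h2: "\<And>p. p \<in> S \<Longrightarrow> h2 p - Pop S P h2 p = h p - c0" by blast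
  have r: "ip S mu g ((Pop S P ^^ Suc i) h) = c0 * m + (ip S mu g ((Pop S P ^^ Suc i) h2) - ip S mu g ((Pop S P ^^ Suc (Suc i)) h2))" for i
  proof -
    have "(Pop S P ^^ Suc i) h p = c0 + ((Pop S P ^^ Suc i) h2 p - (Pop S P ^^ Suc (Suc i)) h2 p)" if p: "p \<in> S" for p
    proof -
      have "(Pop S P ^^ Suc i) (\<lambda>p. h p - c0) p = (Pop S P ^^ Suc i) h p - c0"
        by (simp only: Pn_diff Pn_const[OF p])
      moreover have "(Pop S P ^^ Suc i) (\<lambda>p. h p - c0) p = (Pop S P ^^ Suc i) h2 p - (Pop S P ^^ Suc (Suc i)) h2 p"
        by (rule telescope[OF h2 p])
      ultimately show ?thesis by linarith
    qed
    then have "ip S mu g ((Pop S P ^^ Suc i) h) = ip S mu g (\<lambda>p. c0 + ((Pop S P ^^ Suc i) h2 p - (Pop S P ^^ Suc (Suc i)) h2 p))"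
      by (intro ip_cong) simp_all
    also have "\<dots> = c0 * m + (ip S mu g ((Pop S P ^^ Suc i) h2) - ip S mu g ((Pop S P ^^ Suc (Suc i)) h2))"
      by (simp only: ip_add2 ip_diff2 ip_const2 m_def)
    finally show ?thesis .
  qed
  define R where "R n = ip S mu g ((Pop S P ^^ 1) h2) - ip S mu g ((Pop S P ^^ Suc n) h2)" for n
  have sumr: "(\<Sum>i<n. ip S mu g ((Pop S P ^^ Suc i) h)) = real n * c0 * m + R n" for n
  proof -
    have "(\<Sum>i<n. ip S mu g ((Pop S P ^^ Suc i) h)) = (\<Sum>i<n. c0 * m + (ip S mu g ((Pop S P ^^ Suc i) h2) - ip S mu g ((Pop S P ^^ Suc (Suc i)) h2)))"
      by (simp only: r)
    also have "\<dots> = real n * c0 * m + R n"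
      by (simp only: sum.distrib sum_lessThan_telescope'[of "\<lambda>i. ip S mu g ((Pop S P ^^ Suc i) h2)"] R_def) simp
    finally show ?thesis .
  qed
  define B where "B = (\<Sum>q\<in>S. \<bar>h2 q\<bar>)"
  define C where "C = (\<Sum>p\<in>S. mu p * \<bar>g p\<bar>) * B"
  have hb: "\<bar>h2 q\<bar> \<le> B" if "q \<in> S" for q
    unfolding B_def using that by (intro member_le_sum) auto
  have Rb: "\<bar>R n\<bar> \<le> 2 * C" for n
  proof -
    have "\<bar>ip S mu g ((Pop S P ^^ k) h2)\<bar> \<le> C" for k
      unfolding C_def by (rule ip_bound) (rule Pn_bound[OF hb])
    note a = this
    show ?thesis unfolding R_def using a[of 1] a[of "Suc n"] by linarith
  qed
  define L where "L = m^2 + 2 * ip S mu (\<lambda>p. g p - m) h - ip S mu g g"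
  have K: "ip S mu (\<lambda>p. g p - m) h = ip S mu g h - m * c0"
    by (simp add: ip_diff1 ip_const1 c0_def)
  have g0: "\<gamma> 0 = ip S mu g g" by (simp add: \<gamma>_def)
  have eq: "real n * var_avg S P mu g n = L - 2 * R n / real n" if n: "n > 0" for n
  proof -
    have D: "(\<Sum>i<n. \<Sum>j<n. chain_moment2 S P mu g i j) = 2 * (\<Sum>i<n. \<Sum>k\<le>i. \<gamma> k) - real n * \<gamma> 0"
      by (simp only: mom dsum)
    have "(\<Sum>i<n. \<Sum>k\<le>i. \<gamma> k) = (\<Sum>i<n. real (Suc i) * m * m + ip S mu g h - ip S mu g ((Pop S P ^^ Suc i) h))"
      by (simp only: Sg)
    also have "\<dots> = (\<Sum>i<n. real (Suc i)) * m * m + real n * ip S mu g h - (\<Sum>i<n. ip S mu g ((Pop S P ^^ Suc i) h))"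
      by (simp add: sum.distrib sum_subtractf flip: sum_distrib_right del: of_nat_Suc)
    also have "\<dots> = real n * (real n + 1) / 2 * m * m + real n * ip S mu g h - (real n * c0 * m + R n)"
      by (simp only: sum_Suc_real sumr)
    finally have SS: "(\<Sum>i<n. \<Sum>k\<le>i. \<gamma> k) = real n * (real n + 1) / 2 * m * m + real n * ip S mu g h - (real n * c0 * m + R n)" .
    have M: "(\<Sum>i<n. chain_mean S P mu g i) / real n = m" using n by (simp add: mean)
    have "real n * var_avg S P mu g n = real n * ((2 * (\<Sum>i<n. \<Sum>k\<le>i. \<gamma> k) - real n * \<gamma> 0) / (real n)^2 - m^2)"
      unfolding var_avg_def D M ..
    also have "\<dots> = L - 2 * R n / real n"
      unfolding SS L_def K g0 using n by (simp add: field_simps power2_eq_square)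
    finally show ?thesis .
  qed
  have R0: "(\<lambda>n. 2 * R n / real n) \<longlonglongrightarrow> 0"
  proof (rule Lim_null_comparison)
    show "\<forall>\<^sub>F n in sequentially. norm (2 * R n / real n) \<le> 4 * C / real n"
    proof (rule eventually_sequentiallyI[of 1])
      fix n :: nat assume "1 \<le> n"
      then have "0 < real n" by simp
      then show "norm (2 * R n / real n) \<le> 4 * C / real n"
        using Rb[of n] by (simp add: abs_mult divide_right_mono)
    qed
    show "(\<lambda>n. 4 * C / real n) \<longlonglongrightarrow> 0" by (rule lim_const_over_n)
  qed
  have "(\<lambda>n. L - 2 * R n / real n) \<longlonglongrightarrow> L - 0"
    by (intro tendsto_diff tendsto_const R0)
  then have "(\<lambda>n. L - 2 * R n / real n) \<longlonglongrightarrow> L" by simp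
  then have "(\<lambda>n. real n * var_avg S P mu g n) \<longlonglongrightarrow> L"
    by (rule Lim_transform_eventually)
       (rule eventually_sequentiallyI[of 1], simp add: eq)
  then show ?thesis unfolding L_def .
qed

end

definition Qf :: "'b set \<Rightarrow> ('b \<Rightarrow> real) \<Rightarrow> ('b \<Rightarrow> 'b \<Rightarrow> real) \<Rightarrow> ('b \<Rightarrow> 'b) \<Rightarrow> ('b \<Rightarrow> real) \<Rightarrow> real" where
  "Qf S mu P J y = ip S mu (\<lambda>p. y (J p)) (Aop S P y)"

lemma ip_lin2:
  assumes "\<And>p. p \<in> S \<Longrightarrow> u p * v p = a * (u1 p * v1 p) + b * (u2 p * v2 p)"
  shows "ip S mu u v = a * ip S mu u1 v1 + b * ip S mu u2 v2"
proof -
  have "ip S mu u v = (\<Sum>p\<in>S. a * (mu p * u1 p * v1 p) + b * (mu p * u2 p * v2 p))"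
    unfolding ip_def
  proof (rule sum.cong[OF refl])
    fix p assume p: "p \<in> S"
    have "mu p * u p * v p = mu p * (u p * v p)" by (simp only: mult.assoc)
    also have "\<dots> = mu p * (a * (u1 p * v1 p) + b * (u2 p * v2 p))" by (simp only: assms[OF p])
    also have "\<dots> = a * (mu p * u1 p * v1 p) + b * (mu p * u2 p * v2 p)" by (simp add: algebra_simps)
    finally show "mu p * u p * v p = a * (mu p * u1 p * v1 p) + b * (mu p * u2 p * v2 p)" .
  qed
  also have "\<dots> = a * ip S mu u1 v1 + b * ip S mu u2 v2"
    unfolding ip_def by (simp only: sum.distrib sum_distrib_left)
  finally show ?thesis .
qed

lemma ip_lin1:
  assumes "\<And>p. p \<in> S \<Longrightarrow> u p * v p = a * (u1 p * v1 p)"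
  shows "ip S mu u v = a * ip S mu u1 v1"
  using ip_lin2[of S u v a u1 v1 0 u1 v1 mu] assms by simp

lemma Aop_cong: "(\<And>q. q \<in> S \<Longrightarrow> v q = w q) \<Longrightarrow> p \<in> S \<Longrightarrow> Aop S P v p = Aop S P w p"
  unfolding Aop_def using Pop_cong[of S v w P p] by simp

lemma Aop_add: "Aop S P (\<lambda>p. u p + v p) = (\<lambda>p. Aop S P u p + Aop S P v p)"
  unfolding Aop_def by (simp add: Pop_add fun_eq_iff algebra_simps)

lemma quad_nonneg:
  fixes E :: "'b \<Rightarrow> 'b \<Rightarrow> real"
  assumes fin: "finite S"
    and sym: "\<And>a q. a \<in> S \<Longrightarrow> q \<in> S \<Longrightarrow> E a q = E q a"
    and rows: "\<And>a. a \<in> S \<Longrightarrow> (\<Sum>q\<in>S. E a q) = 0"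
    and off: "\<And>a q. a \<in> S \<Longrightarrow> q \<in> S \<Longrightarrow> a \<noteq> q \<Longrightarrow> E a q \<le> 0"
  shows "0 \<le> (\<Sum>a\<in>S. \<Sum>q\<in>S. E a q * x a * x q)"
proof -
  have cols: "(\<Sum>a\<in>S. E a q) = 0" if "q \<in> S" for q
    using rows[OF that] sym that by (metis (no_types, lifting) sum.cong)
  have le: "(\<Sum>a\<in>S. \<Sum>q\<in>S. E a q * (x a - x q)^2) \<le> 0"
  proof (intro sum_nonpos)
    fix a q assume "a \<in> S" "q \<in> S"
    then show "E a q * (x a - x q)^2 \<le> 0"
      by (cases "a = q") (auto intro: mult_nonpos_nonneg off)
  qed
  have "(\<Sum>a\<in>S. \<Sum>q\<in>S. E a q * (x a - x q)^2)
      = (\<Sum>a\<in>S. \<Sum>q\<in>S. E a q * (x a)^2) + (\<Sum>a\<in>S. \<Sum>q\<in>S. E a q * (x q)^2) - 2 * (\<Sum>a\<in>S. \<Sum>q\<in>S. E a q * x a * x q)"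
    by (simp add: power2_diff algebra_simps sum.distrib sum_subtractf sum_distrib_left)
  also have "(\<Sum>a\<in>S. \<Sum>q\<in>S. E a q * (x a)^2) = (\<Sum>a\<in>S. (\<Sum>q\<in>S. E a q) * (x a)^2)"
    by (simp only: sum_distrib_right)
  also have "\<dots> = 0" by (simp add: rows)
  also have "(\<Sum>a\<in>S. \<Sum>q\<in>S. E a q * (x q)^2) = (\<Sum>q\<in>S. (\<Sum>a\<in>S. E a q) * (x q)^2)"
    by (subst sum.swap) (simp only: sum_distrib_right)
  also have "\<dots> = 0" by (simp add: cols)
  finally show ?thesis using le by simp
qed

context kern
begin

lemma adjA: "ip S mu u (Aop S P v) = ip S mu (\<lambda>p. v (J p)) (Aop S P (\<lambda>p. u (J p)))"
proof -
  have "ip S mu u v = ip S mu (\<lambda>p. v (J p)) (\<lambda>p. u (J p))"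
    by (subst ip_J) (simp add: ip_sym)
  moreover have "ip S mu u (Pop S P v) = ip S mu (\<lambda>p. v (J p)) (Pop S P (\<lambda>p. u (J p)))" by (rule adj)
  ultimately show ?thesis unfolding Aop_def ip_diff2 by simp
qed

lemma Q_add: "Qf S mu P J (\<lambda>p. y p + z p) = Qf S mu P J y + 2 * ip S mu (\<lambda>p. z (J p)) (Aop S P y) + Qf S mu P J z"
proof -
  have "ip S mu (\<lambda>p. y (J p)) (Aop S P z) = ip S mu (\<lambda>p. z (J p)) (Aop S P (\<lambda>p. y (J (J p))))"
    by (rule adjA)
  also have "\<dots> = ip S mu (\<lambda>p. z (J p)) (Aop S P y)"
    by (intro ip_cong refl Aop_cong) (simp_all add: J_J)
  finally have x: "ip S mu (\<lambda>p. y (J p)) (Aop S P z) = ip S mu (\<lambda>p. z (J p)) (Aop S P y)" .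
  show ?thesis unfolding Qf_def Aop_add using x by (simp add: ip_add1 ip_add2)
qed

lemma Q_even: assumes "\<And>p. p \<in> S \<Longrightarrow> e (J p) = e p" shows "0 \<le> Qf S mu P J e"
proof -
  have "Qf S mu P J e = ip S mu e (Aop S P e)" unfolding Qf_def by (intro ip_cong) (simp_all add: assms)
  also have "\<dots> = ip S mu e e - ip S mu e (Pop S P e)" unfolding Aop_def by (simp add: ip_diff2)
  finally show ?thesis using contraction[of e] by simp
qed

lemma Q_odd: assumes "\<And>p. p \<in> S \<Longrightarrow> c (J p) = - c p" shows "Qf S mu P J c \<le> 0"
proof -
  have "Qf S mu P J c = ip S mu (\<lambda>p. - c p) (Aop S P c)" unfolding Qf_def by (intro ip_cong) (simp_all add: assms)
  also have "\<dots> = (-1) * ip S mu c (Aop S P c)" by (rule ip_lin1) simp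
  also have "ip S mu c (Aop S P c) = ip S mu c c - ip S mu c (Pop S P c)" unfolding Aop_def by (simp add: ip_diff2)
  finally show ?thesis using contraction[of c] by simp
qed

lemma even_odd_0:
  assumes "\<And>p. p \<in> S \<Longrightarrow> s (J p) = s p" "\<And>p. p \<in> S \<Longrightarrow> c (J p) = - c p"
  shows "ip S mu c s = 0"
proof -
  have "ip S mu c s = ip S mu (\<lambda>p. c (J p)) (\<lambda>p. s (J p))" by (rule ip_J)
  also have "\<dots> = ip S mu (\<lambda>p. - c p) s" by (intro ip_cong) (simp_all add: assms)
  also have "\<dots> = (-1) * ip S mu c s" by (rule ip_lin1) simp
  finally show ?thesis by simp
qed

lemma decomp:
  assumes g01: "\<And>p. p \<in> S \<Longrightarrow> g1 p = g0 (J p)"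
    and Pg0: "\<And>p. p \<in> S \<Longrightarrow> Pop S P g0 p = g1 p"
    and hP: "\<And>p. p \<in> S \<Longrightarrow> h p - Pop S P h p = g1 p"
  shows "ip S mu g1 h = ip S mu (\<lambda>p. (g0 p + g1 p) / 2) (\<lambda>p. h p + g0 p / 2)
           + ip S mu (\<lambda>p. (g0 p + g1 p) / 2) (\<lambda>p. (g0 p + g1 p) / 2) / 2 - ip S mu g1 g0 / 2"
    and "\<And>p. p \<in> S \<Longrightarrow> Aop S P (\<lambda>p. h p + g0 p / 2) p = (g0 p + g1 p) / 2"
    and "\<And>p. p \<in> S \<Longrightarrow> (g0 (J p) + g1 (J p)) / 2 = (g0 p + g1 p) / 2"
proof -
  define s where "s p = (g0 p + g1 p) / 2" for p
  define t where "t p = (g1 p - g0 p) / 2" for p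
  define k where "k p = h p + g0 p / 2" for p
  have Ak: "Aop S P k p = s p" if "p \<in> S" for p
  proof -
    have "Pop S P k p = Pop S P h p + Pop S P g0 p / 2"
      unfolding k_def Pop_def by (simp add: algebra_simps sum.distrib sum_divide_distrib)
    then show ?thesis using hP[OF that] Pg0[OF that] unfolding Aop_def k_def s_def by simp
  qed
  show "\<And>p. p \<in> S \<Longrightarrow> Aop S P (\<lambda>p. h p + g0 p / 2) p = (g0 p + g1 p) / 2"
    using Ak unfolding k_def s_def by simp
  have seven: "s (J p) = s p" if "p \<in> S" for p
    unfolding s_def using g01[OF that] g01[OF J_in[OF that]] J_J[OF that] by simp
  then show "\<And>p. p \<in> S \<Longrightarrow> (g0 (J p) + g1 (J p)) / 2 = (g0 p + g1 p) / 2"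
    unfolding s_def by simp
  have todd: "t (J p) = - t p" if "p \<in> S" for p
    unfolding t_def using g01[OF that] g01[OF J_in[OF that]] J_J[OF that] by (simp add: field_simps)
  have a: "ip S mu g1 h = 1 * ip S mu g1 k + (- 1/2) * ip S mu g1 g0"
    by (rule ip_lin2) (simp add: k_def algebra_simps)
  have st: "g1 p = s p + t p" for p unfolding s_def t_def by (simp add: field_simps)
  have b: "ip S mu g1 k = 1 * ip S mu s k + 1 * ip S mu t k"
    by (rule ip_lin2) (simp add: st distrib_right)
  have c: "ip S mu t s = 0" by (rule even_odd_0) (simp_all add: seven todd)
  have d: "ip S mu (\<lambda>p. k (J p)) (Aop S P g0) = ip S mu g1 s"
  proof -
    have "ip S mu (\<lambda>p. k (J p)) (Aop S P g0) = ip S mu (\<lambda>p. g0 (J p)) (Aop S P (\<lambda>p. k (J (J p))))"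
      by (rule adjA)
    also have "\<dots> = ip S mu g1 s"
    proof (rule ip_cong)
      fix p assume p: "p \<in> S"
      show "g0 (J p) = g1 p" using g01[OF p] by simp
      have "Aop S P (\<lambda>p. k (J (J p))) p = Aop S P k p" by (rule Aop_cong) (simp_all add: J_J p)
      then show "Aop S P (\<lambda>p. k (J (J p))) p = s p" using Ak[OF p] by simp
    qed
    finally show ?thesis .
  qed
  have e: "ip S mu (\<lambda>p. k (J p)) (Aop S P g0) = 2 * ip S mu t k"
  proof -
    have "ip S mu (\<lambda>p. k (J p)) (Aop S P g0) = ip S mu (\<lambda>p. k (J p)) (\<lambda>p. -2 * t p)"
      by (intro ip_cong refl) (simp add: Aop_def Pg0 t_def)
    also have "\<dots> = -2 * ip S mu (\<lambda>p. k (J p)) t" by (rule ip_lin1) simp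
    also have "ip S mu (\<lambda>p. k (J p)) t = ip S mu (\<lambda>p. k (J (J p))) (\<lambda>p. t (J p))" by (rule ip_J)
    also have "\<dots> = ip S mu k (\<lambda>p. - t p)" by (intro ip_cong) (simp_all add: J_J todd)
    also have "\<dots> = -1 * ip S mu t k" by (rule ip_lin1) simp
    finally show ?thesis by simp
  qed
  have f: "ip S mu g1 s = 1 * ip S mu s s + 1 * ip S mu t s"
    by (rule ip_lin2) (simp only: st distrib_right mult_1_left)
  from a b c d e f have "ip S mu g1 h = ip S mu s k + ip S mu s s / 2 - ip S mu g1 g0 / 2" by simp
  then show "ip S mu g1 h = ip S mu (\<lambda>p. (g0 p + g1 p) / 2) (\<lambda>p. h p + g0 p / 2)
           + ip S mu (\<lambda>p. (g0 p + g1 p) / 2) (\<lambda>p. (g0 p + g1 p) / 2) / 2 - ip S mu g1 g0 / 2"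
    unfolding s_def k_def .
qed

end

lemma dirichlet:
  assumes K: "kern S P mu J" and K': "kern S P' mu J"
    and ord: "\<And>a q. a \<in> S \<Longrightarrow> q \<in> S \<Longrightarrow> a \<noteq> q \<Longrightarrow> P (J a) q \<le> P' (J a) q"
  shows "0 \<le> ip S mu (\<lambda>p. x (J p)) (\<lambda>p. Pop S P x p - Pop S P' x p)"
proof -
  interpret A: kern S P mu J by (rule K)
  interpret B: kern S P' mu J by (rule K')
  define E where "E a q = mu (J a) * (P (J a) q - P' (J a) q)" for a q
  have "ip S mu (\<lambda>p. x (J p)) (\<lambda>p. Pop S P x p - Pop S P' x p)
      = (\<Sum>p\<in>S. \<Sum>q\<in>S. mu p * (P p q - P' p q) * x (J p) * x q)"
    unfolding ip_def Pop_def by (simp add: sum_subtractf[symmetric] sum_distrib_left algebra_simps)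
  also have "\<dots> = (\<Sum>a\<in>S. \<Sum>q\<in>S. mu (J a) * (P (J a) q - P' (J a) q) * x (J (J a)) * x q)"
    using A.sum_J[of "\<lambda>p. \<Sum>q\<in>S. mu p * (P p q - P' p q) * x (J p) * x q"] by simp
  also have "\<dots> = (\<Sum>a\<in>S. \<Sum>q\<in>S. E a q * x a * x q)"
    unfolding E_def by (intro sum.cong refl) (simp add: A.J_J)
  also have "0 \<le> \<dots>"
  proof (rule quad_nonneg)
    show "finite S" by simp
    fix a q assume a: "a \<in> S" and q: "q \<in> S"
    have "mu (J a) * P (J a) q = mu (J q) * P (J q) (J (J a))" using A.skew A.J_in a q by blast
    moreover have "mu (J a) * P' (J a) q = mu (J q) * P' (J q) (J (J a))" using B.skew A.J_in a q by blast
    ultimately show "E a q = E q a" unfolding E_def using A.J_J a by (simp add: algebra_simps)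
    show "a \<noteq> q \<Longrightarrow> E a q \<le> 0" unfolding E_def
      using ord[OF a q] A.mu_nonneg[OF A.J_in[OF a]] by (simp add: mult_nonneg_nonpos)
  next
    fix a assume a: "a \<in> S"
    show "(\<Sum>q\<in>S. E a q) = 0" unfolding E_def
      using A.P_sum[OF A.J_in[OF a]] B.P_sum[OF A.J_in[OF a]]
      by (simp add: sum_subtractf flip: sum_distrib_left)
  qed
  finally show ?thesis .
qed

lemma variational:
  assumes K: "kern S P mu J" and K': "kern S P' mu J"
    and ord: "\<And>a q. a \<in> S \<Longrightarrow> q \<in> S \<Longrightarrow> a \<noteq> q \<Longrightarrow> P (J a) q \<le> P' (J a) q"
    and seven: "\<And>p. p \<in> S \<Longrightarrow> s (J p) = s p"
    and Ak: "\<And>p. p \<in> S \<Longrightarrow> Aop S P k p = s p"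
    and Ak': "\<And>p. p \<in> S \<Longrightarrow> Aop S P' k' p = s p"
  shows "ip S mu s k' \<le> ip S mu s k"
proof -
  interpret A: kern S P mu J by (rule K)
  interpret B: kern S P' mu J by (rule K')
  define e where "e p = (k' p + k' (J p)) / 2 - (k p + k (J p)) / 2" for p
  define c where "c p = (k p - k (J p)) / 2 - (k' p - k' (J p)) / 2" for p
  define x where "x p = k p + e p" for p
  have x': "x = (\<lambda>p. k' p + c p)" unfolding x_def e_def c_def by (rule ext) (simp add: field_simps)
  have eeven: "e (J p) = e p" if "p \<in> S" for p unfolding e_def using A.J_J[OF that] by (simp add: algebra_simps)
  have codd: "c (J p) = - c p" if "p \<in> S" for p unfolding c_def using A.J_J[OF that] by (simp add: field_simps)
  have Qk: "Qf S mu P J k = ip S mu s k"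
  proof -
    have "Qf S mu P J k = ip S mu (\<lambda>p. k (J p)) s" unfolding Qf_def by (intro ip_cong) (simp_all add: Ak)
    also have "\<dots> = ip S mu (\<lambda>p. k (J (J p))) (\<lambda>p. s (J p))" by (rule A.ip_J)
    also have "\<dots> = ip S mu k s" by (intro ip_cong) (simp_all add: A.J_J seven)
    finally show ?thesis by (simp add: ip_sym)
  qed
  have Qk': "Qf S mu P' J k' = ip S mu s k'"
  proof -
    have "Qf S mu P' J k' = ip S mu (\<lambda>p. k' (J p)) s" unfolding Qf_def by (intro ip_cong) (simp_all add: Ak')
    also have "\<dots> = ip S mu (\<lambda>p. k' (J (J p))) (\<lambda>p. s (J p))" by (rule A.ip_J)
    also have "\<dots> = ip S mu k' s" by (intro ip_cong) (simp_all add: A.J_J seven)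
    finally show ?thesis by (simp add: ip_sym)
  qed
  have Qx: "Qf S mu P J x = ip S mu s k + 2 * ip S mu e s + Qf S mu P J e"
  proof -
    have "Qf S mu P J x = Qf S mu P J k + 2 * ip S mu (\<lambda>p. e (J p)) (Aop S P k) + Qf S mu P J e"
      unfolding x_def by (rule A.Q_add)
    moreover have "ip S mu (\<lambda>p. e (J p)) (Aop S P k) = ip S mu e s"
      by (intro ip_cong) (simp_all add: eeven Ak)
    ultimately show ?thesis using Qk by simp
  qed
  have cs: "ip S mu c s = 0" by (rule A.even_odd_0) (simp_all add: seven codd)
  have Qx': "Qf S mu P' J x = ip S mu s k' + Qf S mu P' J c"
  proof -
    have "Qf S mu P' J x = Qf S mu P' J k' + 2 * ip S mu (\<lambda>p. c (J p)) (Aop S P' k') + Qf S mu P' J c"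
      unfolding x' by (rule B.Q_add)
    moreover have "ip S mu (\<lambda>p. c (J p)) (Aop S P' k') = ip S mu (\<lambda>p. - c p) s"
      by (intro ip_cong) (simp_all add: codd Ak')
    moreover have "ip S mu (\<lambda>p. - c p) s = (-1) * ip S mu c s" by (rule ip_lin1) simp
    ultimately show ?thesis using Qk' cs by simp
  qed
  have sx1: "ip S mu s x = 1 * ip S mu s k + 1 * ip S mu s e" by (rule ip_lin2) (simp add: x_def algebra_simps)
  have sx2: "ip S mu s x = 1 * ip S mu s k' + 1 * ip S mu s c" by (rule ip_lin2) (simp add: x' algebra_simps)
  have cs': "ip S mu s c = 0" using cs by (simp add: ip_sym)
  have es: "ip S mu e s = ip S mu s e" by (rule ip_sym)
  have diff: "Qf S mu P' J x - Qf S mu P J x = ip S mu (\<lambda>p. x (J p)) (\<lambda>p. Pop S P x p - Pop S P' x p)"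
    unfolding Qf_def Aop_def ip_def by (simp add: sum_subtractf[symmetric] algebra_simps)
  have D: "0 \<le> ip S mu (\<lambda>p. x (J p)) (\<lambda>p. Pop S P x p - Pop S P' x p)" by (rule dirichlet[OF K K' ord])
  have Qe: "0 \<le> Qf S mu P J e" by (rule A.Q_even) (simp add: eeven)
  have Qc: "Qf S mu P' J c \<le> 0" by (rule B.Q_odd) (simp add: codd)
  show ?thesis using Qx Qx' sx1 sx2 cs' es diff D Qe Qc by linarith
qed

lemma lift_kern:
  fixes T :: "'a::finite \<Rightarrow> 'a \<Rightarrow> real" and pi :: "'a \<Rightarrow> real" and U :: "'a \<Rightarrow> 'a \<Rightarrow> 'a \<Rightarrow> real"
  assumes T_nonneg: "\<And>x y. 0 \<le> T x y"
    and T_sum: "\<And>x. (\<Sum>y\<in>UNIV. T x y) = 1"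
    and pi_pos: "\<And>x. 0 < pi x"
    and pi_sum: "(\<Sum>x\<in>UNIV. pi x) = 1"
    and reversible: "\<And>x y. pi x * T x y = pi y * T y x"
    and U_prob: "\<And>x y. (\<forall>z. 0 \<le> U x y z) \<and> (\<Sum>z\<in>UNIV. U x y z) = 1"
    and U_bal: "\<And>x y z. y \<noteq> z \<Longrightarrow> T x y * U x y z = T x z * U x z y"
  shows "kern {(x, y). T x y > 0} (lift_kernel U) (\<lambda>(x, y). pi x * T x y) (\<lambda>p. (snd p, fst p))"
proof -
  have Tsym: "T y x > 0" if "T x y > 0" for x y
  proof -
    have "pi y * T y x = pi x * T x y" using reversible by simp
    also have "\<dots> > 0" using pi_pos that by simp
    finally show ?thesis using pi_pos[of y] by (simp add: zero_less_mult_iff)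
  qed
  let ?S = "{(x, y). T x y > 0}"
  show ?thesis
  proof
    fix a b :: "'a \<times> 'a"
    show "0 \<le> lift_kernel U a b" unfolding lift_kernel_def using U_prob by simp
  next
    fix a :: "'a \<times> 'a" assume a: "a \<in> ?S"
    obtain x0 x1 where ax: "a = (x0, x1)" by (cases a)
    have T01: "T x0 x1 > 0" using a ax by simp
    have T10: "T x1 x0 > 0" using Tsym[OF T01] .
    have "(\<Sum>b\<in>?S. lift_kernel U a b) = (\<Sum>b\<in>UNIV. lift_kernel U a b)"
    proof (rule sum.mono_neutral_left)
      show "\<forall>b\<in>UNIV - ?S. lift_kernel U a b = 0"
      proof
        fix b assume b: "b \<in> UNIV - ?S"
        obtain y0 y1 where bx: "b = (y0, y1)" by (cases b)
        have Tb: "T y0 y1 = 0" using b bx T_nonneg[of y0 y1] by simp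
        show "lift_kernel U a b = 0"
        proof (cases "x1 = y0")
          case True
          have "y1 \<noteq> x0" using Tb T10 True by auto
          then have "T x1 x0 * U x1 x0 y1 = T x1 y1 * U x1 y1 x0" by (intro U_bal) auto
          then have "U x1 x0 y1 = 0" using Tb True T10 by simp
          then show ?thesis unfolding lift_kernel_def using ax bx True by simp
        next
          case False then show ?thesis unfolding lift_kernel_def using ax bx by simp
        qed
      qed
    qed auto
    also have "\<dots> = (\<Sum>y0\<in>UNIV. \<Sum>y1\<in>UNIV. lift_kernel U a (y0, y1))"
      by (simp add: sum.cartesian_product UNIV_Times_UNIV[symmetric] del: UNIV_Times_UNIV)
    also have "\<dots> = (\<Sum>y0\<in>UNIV. if x1 = y0 then (\<Sum>y1\<in>UNIV. U x1 x0 y1) else 0)"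
      unfolding lift_kernel_def ax by (intro sum.cong refl) auto
    also have "\<dots> = 1" using U_prob by simp
    finally show "(\<Sum>b\<in>?S. lift_kernel U a b) = 1" .
  next
    fix a :: "'a \<times> 'a" assume "a \<in> ?S"
    show "0 \<le> (\<lambda>(x, y). pi x * T x y) a" using pi_pos T_nonneg by (auto simp: less_imp_le split: prod.splits)
  next
    have "(\<Sum>a\<in>?S. (\<lambda>(x, y). pi x * T x y) a) = (\<Sum>a\<in>UNIV. (\<lambda>(x, y). pi x * T x y) a)"
    proof (rule sum.mono_neutral_left)
      show "\<forall>b\<in>UNIV - ?S. (\<lambda>(x, y). pi x * T x y) b = 0"
        using T_nonneg by (auto simp: not_less split: prod.splits intro: antisym)
    qed auto
    also have "\<dots> = (\<Sum>x\<in>UNIV. \<Sum>y\<in>UNIV. pi x * T x y)"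
      by (simp add: sum.cartesian_product UNIV_Times_UNIV[symmetric] del: UNIV_Times_UNIV)
    also have "\<dots> = (\<Sum>x\<in>UNIV. pi x)" by (simp add: T_sum flip: sum_distrib_left)
    finally show "(\<Sum>a\<in>?S. (\<lambda>(x, y). pi x * T x y) a) = 1" using pi_sum by simp
  next
    fix p :: "'a \<times> 'a" assume "p \<in> ?S"
    then show "(snd p, fst p) \<in> ?S" using Tsym by (auto split: prod.splits)
  next
    fix p :: "'a \<times> 'a"
    show "(snd (snd p, fst p), fst (snd p, fst p)) = p" by simp
  next
    fix p :: "'a \<times> 'a"
    show "(\<lambda>(x, y). pi x * T x y) (snd p, fst p) = (\<lambda>(x, y). pi x * T x y) p"
      using reversible by (simp split: prod.splits)
  next
    fix p q :: "'a \<times> 'a"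
    obtain a b where p: "p = (a, b)" by (cases p)
    obtain c d where q: "q = (c, d)" by (cases q)
    show "(\<lambda>(x, y). pi x * T x y) p * lift_kernel U p q =
          (\<lambda>(x, y). pi x * T x y) (snd q, fst q) * lift_kernel U (snd q, fst q) (snd p, fst p)"
    proof (cases "b = c")
      case True
      have e1: "pi a * T a b = pi b * T b a" by (rule reversible)
      have e2: "pi d * T d b = pi b * T b d" by (rule reversible)
      have e3: "T b a * U b a d = T b d * U b d a"
        by (cases "a = d") (simp_all add: U_bal)
      have "pi a * T a b * U b a d = pi b * (T b a * U b a d)" using e1 by simp
      also have "\<dots> = pi b * (T b d * U b d a)" using e3 by simp
      also have "\<dots> = pi d * T d b * U b d a" using e2 by simp
      finally show ?thesis unfolding lift_kernel_def p q using True by simp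
    next
      case False then show ?thesis unfolding lift_kernel_def p q by simp
    qed
  qed
qed

theorem mainTheorem3:
  fixes T :: "'a::finite \<Rightarrow> 'a \<Rightarrow> real"
    and pi :: "'a \<Rightarrow> real"
    and U U' :: "'a \<Rightarrow> 'a \<Rightarrow> 'a \<Rightarrow> real"
    and f :: "'a \<Rightarrow> real"
  assumes T_stoch: "stochastic_on UNIV T"
    and T_irred: "irreducible_on UNIV T"
    and pi_nonneg: "\<And>x. 0 \<le> pi x"
    and pi_sum: "(\<Sum>x\<in>UNIV. pi x) = 1"
    and reversible: "\<And>x y. pi x * T x y = pi y * T y x"
    and U_prob: "\<And>x y. (\<forall>z. 0 \<le> U x y z) \<and> (\<Sum>z\<in>UNIV. U x y z) = 1"
    and U'_prob: "\<And>x y. (\<forall>z. 0 \<le> U' x y z) \<and> (\<Sum>z\<in>UNIV. U' x y z) = 1"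
    and U_bal: "\<And>x y z. y \<noteq> z \<Longrightarrow> T x y * U x y z = T x z * U x z y"
    and U'_bal: "\<And>x y z. y \<noteq> z \<Longrightarrow> T x y * U' x y z = T x z * U' x z y"
    and U'_ge: "\<And>x y z. y \<noteq> z \<Longrightarrow> U' x y z \<ge> U x y z"
    and irr: "irreducible_on {(x, y). T x y > 0} (lift_kernel U)"
    and irr': "irreducible_on {(x, y). T x y > 0} (lift_kernel U')"
  shows "convergent (\<lambda>n. real n * var_avg {(x, y). T x y > 0} (lift_kernel U')
                              (\<lambda>(x, y). pi x * T x y) (\<lambda>p. f (snd p)) n)
       \<and> convergent (\<lambda>n. real n * var_avg {(x, y). T x y > 0} (lift_kernel U)
                              (\<lambda>(x, y). pi x * T x y) (\<lambda>p. f (snd p)) n)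
       \<and> lim (\<lambda>n. real n * var_avg {(x, y). T x y > 0} (lift_kernel U')
                              (\<lambda>(x, y). pi x * T x y) (\<lambda>p. f (snd p)) n)
         \<le> lim (\<lambda>n. real n * var_avg {(x, y). T x y > 0} (lift_kernel U)
                              (\<lambda>(x, y). pi x * T x y) (\<lambda>p. f (snd p)) n)"
proof -
  let ?S = "{(x, y). T x y > 0}"
  let ?mu = "\<lambda>(x, y). pi x * T x y"
  let ?J = "\<lambda>p::'a \<times> 'a. (snd p, fst p)"
  have T_nonneg: "\<And>x y. 0 \<le> T x y" and T_sum: "\<And>x. (\<Sum>y\<in>UNIV. T x y) = 1"
    using T_stoch unfolding stochastic_on_def by auto
  have piT: "(\<Sum>x\<in>UNIV. pi x * T x y) = pi y" for y
  proof -
    have "(\<Sum>x\<in>UNIV. pi x * T x y) = (\<Sum>x\<in>UNIV. pi y * T y x)"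
      using reversible by (intro sum.cong) auto
    also have "\<dots> = pi y" using T_sum by (simp flip: sum_distrib_left)
    finally show ?thesis .
  qed
  have mpow_nn: "0 \<le> mpow UNIV T n a b" for n a b
    by (induction n arbitrary: b) (auto intro!: sum_nonneg simp: T_nonneg)
  have pin: "(\<Sum>a\<in>UNIV. pi a * mpow UNIV T n a b) = pi b" for n b
  proof (induction n arbitrary: b)
    case 0
    have "(\<Sum>a\<in>UNIV. pi a * mpow UNIV T 0 a b) = (\<Sum>a\<in>UNIV. if a = b then pi a else 0)"
      by (intro sum.cong) auto
    then show ?case by simp
  next
    case (Suc n)
    have "(\<Sum>a\<in>UNIV. pi a * mpow UNIV T (Suc n) a b) = (\<Sum>a\<in>UNIV. \<Sum>c\<in>UNIV. pi a * mpow UNIV T n a c * T c b)"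
      by (simp add: sum_distrib_left mult.assoc)
    also have "\<dots> = (\<Sum>c\<in>UNIV. \<Sum>a\<in>UNIV. pi a * mpow UNIV T n a c * T c b)" by (rule sum.swap)
    also have "\<dots> = (\<Sum>c\<in>UNIV. (\<Sum>a\<in>UNIV. pi a * mpow UNIV T n a c) * T c b)"
      by (simp only: sum_distrib_right)
    also have "\<dots> = (\<Sum>c\<in>UNIV. pi c * T c b)" using Suc by simp
    also have "\<dots> = pi b" by (rule piT)
    finally show ?case .
  qed
  obtain a0 where a0: "pi a0 > 0"
  proof (rule ccontr)
    assume "\<not> thesis"
    then have "\<And>x. x \<in> UNIV \<Longrightarrow> pi x \<le> 0" using that by (meson not_less)
    then have "(\<Sum>x\<in>UNIV. pi x) \<le> 0" by (rule sum_nonpos)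
    with pi_sum show False by simp
  qed
  have pi_pos: "0 < pi x" for x
  proof -
    obtain n where n: "mpow UNIV T n a0 x > 0" using T_irred unfolding irreducible_on_def by blast
    have "pi a0 * mpow UNIV T n a0 x \<le> (\<Sum>a\<in>UNIV. pi a * mpow UNIV T n a x)"
      by (rule member_le_sum) (auto intro: mult_nonneg_nonneg pi_nonneg mpow_nn)
    moreover have "0 < pi a0 * mpow UNIV T n a0 x" using a0 n by simp
    ultimately show ?thesis using pin by simp
  qed
  have KA: "kern ?S (lift_kernel U) ?mu ?J"
    by (rule lift_kern[OF T_nonneg T_sum pi_pos pi_sum reversible U_prob U_bal])
  have KB: "kern ?S (lift_kernel U') ?mu ?J"
    by (rule lift_kern[OF T_nonneg T_sum pi_pos pi_sum reversible U'_prob U'_bal])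
  interpret A: kern ?S "lift_kernel U" ?mu ?J by (rule KA)
  interpret B: kern ?S "lift_kernel U'" ?mu ?J by (rule KB)
  define m where "m = (\<Sum>p\<in>?S. ?mu p * f (snd p))"
  have mz: "(\<Sum>p\<in>?S. ?mu p * (f (snd p) - m)) = 0"
    by (simp add: right_diff_distrib sum_subtractf A.mu_sum m_def flip: sum_distrib_right)
  have "\<exists>h. \<forall>p\<in>?S. h p - Pop ?S (lift_kernel U) h p = f (snd p) - m"
    by (rule A.poisson[OF irr mz])
  then obtain h where hA: "\<And>p. p \<in> ?S \<Longrightarrow> h p - Pop ?S (lift_kernel U) h p = f (snd p) - m" by blast
  have "\<exists>h. \<forall>p\<in>?S. h p - Pop ?S (lift_kernel U') h p = f (snd p) - m"
    by (rule B.poisson[OF irr' mz])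
  then obtain h' where hB: "\<And>p. p \<in> ?S \<Longrightarrow> h' p - Pop ?S (lift_kernel U') h' p = f (snd p) - m" by blast
  have LA: "(\<lambda>n. real n * var_avg ?S (lift_kernel U) ?mu (\<lambda>p. f (snd p)) n) \<longlonglongrightarrow>
      m^2 + 2 * ip ?S ?mu (\<lambda>p. f (snd p) - m) h - ip ?S ?mu (\<lambda>p. f (snd p)) (\<lambda>p. f (snd p))"
    by (rule A.limit[OF irr m_def hA])
  have LB: "(\<lambda>n. real n * var_avg ?S (lift_kernel U') ?mu (\<lambda>p. f (snd p)) n) \<longlonglongrightarrow>
      m^2 + 2 * ip ?S ?mu (\<lambda>p. f (snd p) - m) h' - ip ?S ?mu (\<lambda>p. f (snd p)) (\<lambda>p. f (snd p))"
    by (rule B.limit[OF irr' m_def hB])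
  have g01: "\<And>p. p \<in> ?S \<Longrightarrow> (\<lambda>p. f (snd p) - m) p = (\<lambda>p. f (fst p) - m) (?J p)" by simp
  have Pg0: "Pop ?S (lift_kernel V) (\<lambda>p. f (fst p) - m) p = f (snd p) - m"
    if p: "p \<in> ?S" and Vs: "(\<Sum>q\<in>?S. lift_kernel V p q) = 1" for V p
  proof -
    have "Pop ?S (lift_kernel V) (\<lambda>p. f (fst p) - m) p = (\<Sum>q\<in>?S. lift_kernel V p q * (f (snd p) - m))"
      unfolding Pop_def by (intro sum.cong refl) (simp add: lift_kernel_def)
    also have "\<dots> = f (snd p) - m" using Vs by (simp flip: sum_distrib_right)
    finally show ?thesis .
  qed
  have PgA: "\<And>p. p \<in> ?S \<Longrightarrow> Pop ?S (lift_kernel U) (\<lambda>p. f (fst p) - m) p = f (snd p) - m"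
    using Pg0 A.P_sum by blast
  have PgB: "\<And>p. p \<in> ?S \<Longrightarrow> Pop ?S (lift_kernel U') (\<lambda>p. f (fst p) - m) p = f (snd p) - m"
    using Pg0 B.P_sum by blast
  note dA = A.decomp[of "\<lambda>p. f (snd p) - m" "\<lambda>p. f (fst p) - m" h, OF g01 PgA hA]
  note dB = B.decomp[of "\<lambda>p. f (snd p) - m" "\<lambda>p. f (fst p) - m" h', OF g01 PgB hB]
  have ord: "lift_kernel U (?J a) q \<le> lift_kernel U' (?J a) q"
    if "a \<in> ?S" "q \<in> ?S" "a \<noteq> q" for a q
  proof (cases "fst a = fst q")
    case True
    then have "snd a \<noteq> snd q" using that(3) by (metis prod_eqI)
    then show ?thesis unfolding lift_kernel_def using True U'_ge by simp
  next
    case False then show ?thesis unfolding lift_kernel_def by simp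
  qed
  have var: "ip ?S ?mu (\<lambda>p. (f (fst p) - m + (f (snd p) - m)) / 2) (\<lambda>p. h' p + (f (fst p) - m) / 2)
           \<le> ip ?S ?mu (\<lambda>p. (f (fst p) - m + (f (snd p) - m)) / 2) (\<lambda>p. h p + (f (fst p) - m) / 2)"
    by (rule variational[OF KA KB ord dA(3) dA(2) dB(2)]) auto
  have cmp: "ip ?S ?mu (\<lambda>p. f (snd p) - m) h' \<le> ip ?S ?mu (\<lambda>p. f (snd p) - m) h"
    using dA(1) dB(1) var by linarith
  show ?thesis
    using LA LB cmp by (auto intro: convergentI simp: limI)
qed

end
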